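(* Let $\psi$ be a non-negative locally finite Borel measure on $\mathbb R^d$. If every (open) half-space of $\mathbb R^d$ has infinite $\psi$-measure, then all Voronoi territories with respect to $\psi$ are bounded. In particular, if $\Psi$ is a stationary random measure on $\mathbb R^d$ which is almost surely non-zero, then almost surely all Voronoi territories with respect to $\Psi_\omega$ are bounded.
   Context: $\overline B(x,r)$ denotes the closed ball. Voronoi density with respect to $\psi$ (with $\psi(\mathbb R^d)\ge 1$): for $x\in\mathbb R^d$ let $s(x)=\sup\{s\in\mathbb R:\psi(\overline B(x,s))\le1\}$ and $v(x,\xi)=1$ if $|x-\xi|<s(x)$, $v(x,\xi)=c$ if $|x-\xi|=s(x)$, $v(x,\xi)=0$ if $|x-\xi|>s(x)$, where $c\in[0,1]$ is such that $\int v(x,\xi)\psi(d\xi)=1$, with $c=1$ if $s(x)=\infty$ or $\psi(\partial\overline B(x,s(x)))=0$. The Voronoi territory of $\xi$ with respect to $\psi$ is $\{x:v(x,\xi)>0\}$. Random setup: measurable space $(\Omega,\mathcal F)$ with a measurable flow $(\theta_s)_{s\in\mathbb R^d}$ and probability $\mathbb P$; a random measure is a measurable $\Psi:\Omega\to M$ (non-negative locally finite Borel measures), stationary if $\mathbb P$ is invariant under all $\theta_s$ and $\Psi(\theta_s\omega)(B)=\Psi(\omega)(B+s)$ for all $s,\omega,B$. *)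

theory Defs
  imports "HOL-Probability.Probability"
begin

definition locally_finite_borel :: "'a::euclidean_space measure \<Rightarrow> bool" where
  "locally_finite_borel \<psi> \<longleftrightarrow> sets \<psi> = sets borel \<and> (\<forall>K. compact K \<longrightarrow> emeasure \<psi> K < \<infinity>)"

definition voronoi_radius :: "'a::euclidean_space measure \<Rightarrow> 'a \<Rightarrow> ereal" where
  "voronoi_radius \<psi> x = Sup (ereal ` {s::real. emeasure \<psi> (cball x s) \<le> 1})"

definition voronoi_aux :: "'a::euclidean_space measure \<Rightarrow> 'a \<Rightarrow> real \<Rightarrow> 'a \<Rightarrow> real" where
  "voronoi_aux \<psi> x c \<xi> =
     (if ereal (dist x \<xi>) < voronoi_radius \<psi> x then 1
      else if ereal (dist x \<xi>) = voronoi_radius \<psi> x then c else 0)"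

definition voronoi_c :: "'a::euclidean_space measure \<Rightarrow> 'a \<Rightarrow> real" where
  "voronoi_c \<psi> x =
     (if voronoi_radius \<psi> x = \<infinity>
         \<or> emeasure \<psi> (sphere x (real_of_ereal (voronoi_radius \<psi> x))) = 0 then 1
      else (THE c. c \<in> {0..1} \<and> (\<integral>\<^sup>+ \<xi>. ennreal (voronoi_aux \<psi> x c \<xi>) \<partial>\<psi>) = 1))"

definition voronoi_density :: "'a::euclidean_space measure \<Rightarrow> 'a \<Rightarrow> 'a \<Rightarrow> real" where
  "voronoi_density \<psi> x \<xi> = voronoi_aux \<psi> x (voronoi_c \<psi> x) \<xi>"

definition voronoi_territory :: "'a::euclidean_space measure \<Rightarrow> 'a \<Rightarrow> 'a set" where
  "voronoi_territory \<psi> \<xi> = {x. voronoi_density \<psi> x \<xi> > 0}"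

definition measurable_flow :: "'w measure \<Rightarrow> ('a::euclidean_space \<Rightarrow> 'w \<Rightarrow> 'w) \<Rightarrow> bool" where
  "measurable_flow M \<theta> \<longleftrightarrow>
     (\<lambda>(s, \<omega>). \<theta> s \<omega>) \<in> measurable (borel \<Otimes>\<^sub>M M) M
     \<and> (\<forall>\<omega>\<in>space M. \<theta> 0 \<omega> = \<omega>)
     \<and> (\<forall>s t. \<forall>\<omega>\<in>space M. \<theta> (s + t) \<omega> = \<theta> s (\<theta> t \<omega>))"

definition random_measure :: "'w measure \<Rightarrow> ('w \<Rightarrow> 'a::euclidean_space measure) \<Rightarrow> bool" where
  "random_measure M \<Psi> \<longleftrightarrow>
     (\<forall>\<omega>\<in>space M. locally_finite_borel (\<Psi> \<omega>))
     \<and> (\<forall>B\<in>sets borel. (\<lambda>\<omega>. emeasure (\<Psi> \<omega>) B) \<in> borel_measurable M)"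

definition stationary_random_measure ::
  "'w measure \<Rightarrow> ('a::euclidean_space \<Rightarrow> 'w \<Rightarrow> 'w) \<Rightarrow> ('w \<Rightarrow> 'a measure) \<Rightarrow> bool" where
  "stationary_random_measure M \<theta> \<Psi> \<longleftrightarrow>
     prob_space M \<and> measurable_flow M \<theta> \<and> random_measure M \<Psi>
     \<and> (\<forall>s. distr M M (\<theta> s) = M)
     \<and> (\<forall>s. \<forall>\<omega>\<in>space M. \<forall>B\<in>sets borel.
           emeasure (\<Psi> (\<theta> s \<omega>)) B = emeasure (\<Psi> \<omega>) ((\<lambda>x. x + s) ` B))"

end

theory Submission
  imports Defs
begin

lemma terr_le:
  assumes "x \<in> voronoi_territory \<psi> \<xi>"
  shows "ereal (dist x \<xi>) \<le> voronoi_radius \<psi> x"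
  using assms unfolding voronoi_territory_def voronoi_density_def voronoi_aux_def
  by (auto split: if_splits)

lemma radius_cball:
  assumes "ereal R \<le> voronoi_radius \<psi> x" "r < R" "sets \<psi> = sets borel"
  shows "emeasure \<psi> (cball x r) \<le> 1"
proof -
  have "ereal r < Sup (ereal ` {s::real. emeasure \<psi> (cball x s) \<le> 1})"
    using assms(1,2) unfolding voronoi_radius_def by (meson less_ereal.simps(1) less_le_trans)
  then obtain s where s: "emeasure \<psi> (cball x s) \<le> 1" "r < s"
    by (auto simp: less_Sup_iff)
  have "emeasure \<psi> (cball x r) \<le> emeasure \<psi> (cball x s)"
    using s(2) assms(3) by (intro emeasure_mono) (auto simp: sets_eq_imp_space_eq)
  with s show ?thesis by simp
qed

lemma geom:
  fixes u w y \<xi> :: "'a::euclidean_space" and k R :: real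
  assumes "norm u = 1" "norm w = 1" "u \<bullet> (y - \<xi>) > 1" "norm (y - \<xi>) \<le> k"
    "norm (w - u) * k \<le> 1/2" "R \<ge> 2*k^2 + 1"
  shows "dist y (\<xi> + R *\<^sub>R w) \<le> R - 1/4"
proof -
  have k0: "k \<ge> 0" using assms(4) norm_ge_zero order_trans by blast
  have "\<bar>(w - u) \<bullet> (y - \<xi>)\<bar> \<le> norm (w - u) * norm (y - \<xi>)" by (rule Cauchy_Schwarz_ineq2)
  also have "\<dots> \<le> norm (w - u) * k" using assms(4) by (simp add: mult_left_mono)
  finally have "\<bar>(w - u) \<bullet> (y - \<xi>)\<bar> \<le> 1/2" using assms(5) by simp
  hence "(w - u) \<bullet> (y - \<xi>) \<ge> - 1/2" by linarith
  hence wy: "w \<bullet> (y - \<xi>) \<ge> 1/2" using assms(3) by (simp add: inner_diff_left)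
  have eq: "(norm (y - (\<xi> + R *\<^sub>R w)))^2 = (norm (y - \<xi>))^2 - 2*R*(w \<bullet> (y - \<xi>)) + R^2"
  proof -
    have "y - (\<xi> + R *\<^sub>R w) = (y - \<xi>) - R *\<^sub>R w" by (simp add: algebra_simps)
    hence "(norm (y - (\<xi> + R *\<^sub>R w)))^2 = (norm ((y - \<xi>) - R *\<^sub>R w))^2" by metis
    also have "\<dots> = (norm (y - \<xi>))^2 - 2 * ((y - \<xi>) \<bullet> (R *\<^sub>R w)) + (norm (R *\<^sub>R w))^2"
      by (simp add: dot_norm_neg field_simps)
    also have "\<dots> = (norm (y - \<xi>))^2 - 2*R*(w \<bullet> (y - \<xi>)) + R^2"
      using assms(2) by (simp add: inner_commute power_mult_distrib)
    finally show ?thesis .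
  qed
  have n2: "(norm (y - \<xi>))^2 \<le> k^2" using assms(4) by (simp add: power_mono)
  have R0: "R > 0" using assms(6) by (smt (verit) zero_le_power2)
  have "(norm (y - (\<xi> + R *\<^sub>R w)))^2 \<le> k^2 - R + R^2"
  proof -
    have "2*R*(w \<bullet> (y - \<xi>)) \<ge> 2*R*(1/2)" using wy R0 by (intro mult_left_mono) auto
    thus ?thesis using eq n2 by linarith
  qed
  also have "\<dots> \<le> (R - 1/4)^2" using assms(6) by (simp add: power2_eq_square algebra_simps)
  finally have "(norm (y - (\<xi> + R *\<^sub>R w)))^2 \<le> (R - 1/4)^2" .
  hence "norm (y - (\<xi> + R *\<^sub>R w)) \<le> R - 1/4"
  proof (rule power2_le_imp_le)
    have "0 \<le> k^2" by simp
    thus "0 \<le> R - 1/4" using assms(6) by linarith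
  qed
  thus ?thesis by (simp add: dist_norm)
qed

lemma lemmaA:
  fixes \<psi> :: "'a::euclidean_space measure"
  assumes sets: "sets \<psi> = sets borel"
    and hs: "\<forall>a b. a \<noteq> 0 \<longrightarrow> emeasure \<psi> {x. a \<bullet> x > b} = \<infinity>"
  shows "bounded (voronoi_territory \<psi> \<xi>)"
proof (rule ccontr)
  let ?T = "voronoi_territory \<psi> \<xi>"
  assume nb: "\<not> bounded ?T"
  have "\<forall>n::nat. \<exists>x\<in>?T. dist \<xi> x > real n"
    using nb unfolding bounded_any_center[of _ \<xi>] by (meson not_le)
  then obtain f where f: "\<And>n. f n \<in> ?T" "\<And>n. dist \<xi> (f n) > real n"
    by metis
  define Rr where "Rr n = dist \<xi> (f n)" for n
  define w where "w n = (1 / Rr n) *\<^sub>R (f n - \<xi>)" for n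
  have Rpos: "Rr n > 0" for n using f(2)[of n] unfolding Rr_def
    by (smt (verit) of_nat_0_le_iff)
  have fn: "f n = \<xi> + Rr n *\<^sub>R w n" for n
    using Rpos[of n] by (simp add: w_def)
  have nw: "norm (w n) = 1" for n
    using Rpos[of n] by (simp add: w_def Rr_def dist_norm norm_minus_commute)
  have "compact (sphere (0::'a) 1)" by simp
  hence "seq_compact (sphere (0::'a) 1)" by (rule compact_imp_seq_compact)
  moreover have "\<forall>n. w n \<in> sphere 0 1" using nw by simp
  ultimately obtain u r where u: "u \<in> sphere 0 1" "strict_mono r" "(w \<circ> r) \<longlonglongrightarrow> u"
    unfolding seq_compact_def by metis
  have nu: "norm u = 1" using u(1) by simp
  define H where "H = {y. u \<bullet> y > u \<bullet> \<xi> + 1}"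
  have Hinf: "emeasure \<psi> H = \<infinity>" unfolding H_def using hs nu by (metis norm_zero zero_neq_one)
  define A where "A k = H \<inter> cball \<xi> (real k)" for k :: nat
  have Hmeas: "H \<in> sets borel" unfolding H_def
    by (intro borel_open open_Collect_less) (auto intro: continuous_intros)
  have Ameas: "range A \<subseteq> sets \<psi>" unfolding A_def sets using Hmeas by auto
  have Ainc: "incseq A" unfolding A_def incseq_def
    by (auto simp: subset_eq)
  have "(\<Union>k. A k) = H" unfolding A_def
  proof (auto)
    fix y assume "y \<in> H"
    obtain k :: nat where "dist \<xi> y \<le> real k" using real_arch_simple by blast
    thus "\<exists>k. dist \<xi> y \<le> real k" by blast
  qed
  hence S: "(SUP k. emeasure \<psi> (A k)) = \<infinity>" using SUP_emeasure_incseq[OF Ameas Ainc] Hinf by simp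
  have "(1::ennreal) < (SUP k. emeasure \<psi> (A k))" unfolding S by simp
  then obtain k where k: "emeasure \<psi> (A k) > 1" by (auto simp del: SUP_eq_top_iff simp: less_SUP_iff)
  have "\<forall>\<^sub>F n in sequentially. dist ((w \<circ> r) n) u < 1 / (2 * real k + 2)"
  proof -
    have "1 / (2 * real k + 2) > 0" by (simp add: add_pos_nonneg)
    thus ?thesis using u(3) unfolding tendsto_iff by blast
  qed
  then obtain N where N: "\<And>n. n \<ge> N \<Longrightarrow> dist ((w \<circ> r) n) u < 1 / (2 * real k + 2)"
    by (auto simp: eventually_sequentially)
  obtain m :: nat where m: "real m \<ge> 2 * (real k)^2 + 1" using real_arch_simple by blast
  define n where "n = max N m"
  have "n \<le> r n" using u(2) by (rule seq_suble)
  hence "real m \<le> real (r n)" unfolding n_def by simp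
  hence Rbig: "Rr (r n) \<ge> 2 * (real k)^2 + 1"
    using f(2)[of "r n"] m unfolding Rr_def by linarith
  have close: "dist (w (r n)) u < 1 / (2 * real k + 2)" using N[of n] by (simp add: n_def)
  have close2: "norm (w (r n) - u) * real k \<le> 1/2"
  proof -
    have "norm (w (r n) - u) * real k \<le> (1 / (2 * real k + 2)) * real k"
      using close by (intro mult_right_mono) (auto simp: dist_norm)
    also have "\<dots> \<le> 1/2" by (simp add: field_simps)
    finally show ?thesis .
  qed
  have sub: "A k \<subseteq> cball (f (r n)) (Rr (r n) - 1/4)"
  proof
    fix y assume "y \<in> A k"
    hence y: "u \<bullet> (y - \<xi>) > 1" "norm (y - \<xi>) \<le> real k"
      unfolding A_def H_def by (auto simp: inner_diff_right dist_norm norm_minus_commute)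
    have "dist y (\<xi> + Rr (r n) *\<^sub>R w (r n)) \<le> Rr (r n) - 1/4"
      by (rule geom[OF nu nw y close2 Rbig])
    thus "y \<in> cball (f (r n)) (Rr (r n) - 1/4)" using fn by (simp add: dist_commute)
  qed
  have "ereal (dist (f (r n)) \<xi>) \<le> voronoi_radius \<psi> (f (r n))" by (rule terr_le[OF f(1)])
  hence "emeasure \<psi> (cball (f (r n)) (Rr (r n) - 1/4)) \<le> 1"
    by (intro radius_cball[OF _ _ sets]) (auto simp: Rr_def dist_commute)
  moreover have "emeasure \<psi> (A k) \<le> emeasure \<psi> (cball (f (r n)) (Rr (r n) - 1/4))"
    using sub sets by (intro emeasure_mono) auto
  ultimately show False using k by simp
qed

definition vcone :: "'a::euclidean_space \<Rightarrow> 'a \<Rightarrow> 'a set" where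
  "vcone p v = {y. norm v / 2 * norm (y - p) < v \<bullet> (y - p)}"

lemma vcone_open: "open (vcone p v)"
  unfolding vcone_def by (intro open_Collect_less continuous_intros)

lemma lemmaB:
  fixes \<psi> :: "'a::euclidean_space measure"
  assumes sets: "sets \<psi> = sets borel"
    and D: "\<forall>X. open X \<longrightarrow> X \<noteq> {} \<longrightarrow> (\<exists>d\<in>D. d \<in> X)"
    and C: "\<forall>p\<in>D. \<forall>v\<in>D. v \<noteq> 0 \<longrightarrow> emeasure \<psi> (vcone p v) = \<infinity>"
  shows "\<forall>a b. a \<noteq> 0 \<longrightarrow> emeasure \<psi> {x. a \<bullet> x > b} = \<infinity>"
proof (intro allI impI)
  fix a :: 'a and b :: real assume a: "a \<noteq> 0"
  have "open (ball a (norm a / 3))" "ball a (norm a / 3) \<noteq> {}" using a by auto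
  then obtain v where v: "v \<in> D" "v \<in> ball a (norm a / 3)" using D by blast
  have av: "norm (a - v) < norm a / 3" using v(2) by (simp add: dist_norm)
  have "norm a \<le> norm v + norm (a - v)" by (metis add.commute diff_add_cancel norm_triangle_ineq)
  hence vbig: "norm (a - v) < norm v / 2" using av by linarith
  hence v0: "v \<noteq> 0" using av by auto
  let ?z = "((b + 1) / (a \<bullet> a)) *\<^sub>R a"
  have "a \<bullet> ?z = b + 1" using a by simp
  hence "?z \<in> {x. a \<bullet> x > b}" by (simp only: mem_Collect_eq)
  hence ne: "{x. a \<bullet> x > b} \<noteq> {}" by blast
  have "open {x. a \<bullet> x > b}" by (intro open_Collect_less continuous_intros)
  note this ne
  then obtain p where p: "p \<in> D" "a \<bullet> p > b" using D by auto
  have sub: "vcone p v \<subseteq> {x. a \<bullet> x > b}"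
  proof
    fix y assume "y \<in> vcone p v"
    hence y: "norm v / 2 * norm (y - p) < v \<bullet> (y - p)" by (simp add: vcone_def)
    have "\<bar>(a - v) \<bullet> (y - p)\<bar> \<le> norm (a - v) * norm (y - p)" by (rule Cauchy_Schwarz_ineq2)
    also have "\<dots> \<le> norm v / 2 * norm (y - p)" using vbig by (intro mult_right_mono) auto
    finally have "(a - v) \<bullet> (y - p) \<ge> - (norm v / 2 * norm (y - p))" by linarith
    hence "a \<bullet> (y - p) > 0" using y by (simp add: inner_diff_left)
    thus "y \<in> {x. a \<bullet> x > b}" using p by (simp add: inner_diff_right)
  qed
  have "emeasure \<psi> (vcone p v) \<le> emeasure \<psi> {x. a \<bullet> x > b}"
    using sub sets by (intro emeasure_mono) (auto intro!: borel_open open_Collect_less continuous_intros)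
  thus "emeasure \<psi> {x. a \<bullet> x > b} = \<infinity>" using C p v v0 by (simp add: top_unique)
qed

lemma mem_translate: fixes y :: "'a::ab_group_add" shows "y \<in> (\<lambda>x. x + s) ` B \<longleftrightarrow> y - s \<in> B"
proof
  assume "y \<in> (\<lambda>x. x + s) ` B" then obtain x where "x \<in> B" "y = x + s" by auto
  thus "y - s \<in> B" by simp
next
  assume "y - s \<in> B"
  moreover have "y = (y - s) + s" by simp
  ultimately show "y \<in> (\<lambda>x. x + s) ` B" by blast
qed

lemma vcone_shift:
  assumes "v \<noteq> 0"
  shows "(\<lambda>x. x + v) ` vcone p v \<subseteq> vcone p v"
proof
  fix y assume "y \<in> (\<lambda>x. x + v) ` vcone p v"
  then obtain z where z: "z \<in> vcone p v" "y = z + v" by auto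
  let ?w = "z - p"
  have h: "norm v / 2 * norm ?w < v \<bullet> ?w" using z(1) by (simp add: vcone_def)
  have "norm (?w + v) \<le> norm ?w + norm v" by (rule norm_triangle_ineq)
  hence "norm v / 2 * norm (?w + v) \<le> norm v / 2 * (norm ?w + norm v)" by (simp add: mult_left_mono)
  also have "\<dots> = norm v / 2 * norm ?w + norm v / 2 * norm v" by (simp add: algebra_simps)
  also have "\<dots> < v \<bullet> ?w + v \<bullet> v"
  proof -
    have "norm v / 2 * norm v \<le> v \<bullet> v" by (simp add: power2_norm_eq_inner[symmetric] power2_eq_square)
    thus ?thesis using h by linarith
  qed
  also have "\<dots> = v \<bullet> (?w + v)" by (simp add: inner_add_right)
  finally have "norm v / 2 * norm (?w + v) < v \<bullet> (?w + v)" .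
  moreover have "y - p = ?w + v" using z(2) by (simp add: algebra_simps)
  ultimately show "y \<in> vcone p v" unfolding vcone_def mem_Collect_eq by metis
qed

lemma vcone_inter:
  assumes "v \<noteq> 0"
  shows "(\<Inter>n. (\<lambda>x. x + real n *\<^sub>R v) ` vcone p v) = {}"
proof (rule ccontr)
  assume "(\<Inter>n. (\<lambda>x. x + real n *\<^sub>R v) ` vcone p v) \<noteq> {}"
  then obtain y where y: "\<And>n. y \<in> (\<lambda>x. x + real n *\<^sub>R v) ` vcone p v" by blast
  let ?w = "y - p"
  have nv: "norm v > 0" using assms by simp
  obtain n :: nat where n: "norm ?w / norm v < real n" using reals_Archimedean2 by blast
  hence n': "norm ?w < real n * norm v" using nv by (simp add: field_simps)
  have "y - real n *\<^sub>R v \<in> vcone p v" using y[of n] by (simp add: mem_translate)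
  moreover have "y - real n *\<^sub>R v - p = ?w - real n *\<^sub>R v" by (simp add: algebra_simps)
  ultimately have h: "norm v / 2 * norm (?w - real n *\<^sub>R v) < v \<bullet> (?w - real n *\<^sub>R v)"
    by (simp add: vcone_def)
  have "norm (real n *\<^sub>R v) \<le> norm (?w - real n *\<^sub>R v) + norm ?w"
    by (metis norm_minus_commute norm_triangle_sub add.commute)
  hence t: "real n * norm v - norm ?w \<le> norm (?w - real n *\<^sub>R v)" by simp
  have "v \<bullet> (?w - real n *\<^sub>R v) = v \<bullet> ?w - real n * (norm v)^2"
    by (simp add: inner_diff_right power2_norm_eq_inner)
  also have "\<dots> \<le> norm v * norm ?w - real n * (norm v)^2"
    using Cauchy_Schwarz_ineq2[of v ?w] by linarith
  finally have A: "v \<bullet> (?w - real n *\<^sub>R v) \<le> norm v * norm ?w - real n * (norm v)^2" .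
  have B: "norm v / 2 * (real n * norm v - norm ?w) \<le> norm v / 2 * norm (?w - real n *\<^sub>R v)"
    using t nv by (intro mult_left_mono) auto
  from h A B have "norm v / 2 * (real n * norm v - norm ?w) < norm v * norm ?w - real n * (norm v)^2"
    by linarith
  hence "3/2 * (norm v * (real n * norm v)) < 3/2 * (norm v * norm ?w)"
    by (simp add: algebra_simps power2_eq_square)
  hence "norm v * (real n * norm v) < norm v * norm ?w" by (simp add: algebra_simps)
  hence "real n * norm v < norm ?w" using nv by simp
  with n' show False by simp
qed

lemma vcone_union:
  assumes "v \<noteq> 0"
  shows "(\<Union>n. (\<lambda>x. x + (- real n) *\<^sub>R v) ` vcone p v) = UNIV"
proof (intro set_eqI iffI)
  fix y :: 'a
  let ?w = "y - p"
  have nv: "norm v > 0" using assms by simp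
  obtain n :: nat where n: "3 * norm ?w / norm v < real n" using reals_Archimedean2 by blast
  hence n': "3 * norm ?w < real n * norm v" using nv by (simp add: field_simps)
  have "norm (?w + real n *\<^sub>R v) \<le> norm ?w + real n * norm v"
    using norm_triangle_ineq[of ?w "real n *\<^sub>R v"] by simp
  hence B: "norm v / 2 * norm (?w + real n *\<^sub>R v) \<le> norm v / 2 * (norm ?w + real n * norm v)"
    using nv by (intro mult_left_mono) auto
  have "v \<bullet> (?w + real n *\<^sub>R v) = v \<bullet> ?w + real n * (norm v)^2"
    by (simp add: inner_add_right power2_norm_eq_inner)
  moreover have "v \<bullet> ?w \<ge> - (norm v * norm ?w)"
    using Cauchy_Schwarz_ineq2[of v ?w] by linarith
  ultimately have A: "v \<bullet> (?w + real n *\<^sub>R v) \<ge> - (norm v * norm ?w) + real n * (norm v)^2" by linarith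
  have "norm v * (3 * norm ?w) < norm v * (real n * norm v)" using n' nv by simp
  hence "norm v / 2 * (norm ?w + real n * norm v) < - (norm v * norm ?w) + real n * (norm v)^2"
    by (simp add: algebra_simps power2_eq_square)
  with A B have "norm v / 2 * norm (?w + real n *\<^sub>R v) < v \<bullet> (?w + real n *\<^sub>R v)" by linarith
  moreover have "y - (- real n) *\<^sub>R v - p = ?w + real n *\<^sub>R v" by (simp add: algebra_simps)
  ultimately have "y - (- real n) *\<^sub>R v \<in> vcone p v" unfolding vcone_def mem_Collect_eq by metis
  hence "y \<in> (\<lambda>x. x + (- real n) *\<^sub>R v) ` vcone p v" by (simp only: mem_translate)
  thus "y \<in> (\<Union>n. (\<lambda>x. x + (- real n) *\<^sub>R v) ` vcone p v)" by blast
qed simp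

lemma translate_borel:
  fixes B :: "'a::euclidean_space set"
  assumes "B \<in> sets borel"
  shows "(\<lambda>x. x + s) ` B \<in> sets borel"
proof -
  have eq: "(\<lambda>x. x + s) ` B = (\<lambda>x. x - s) -` B \<inter> space borel"
    by (auto simp: mem_translate)
  have "(\<lambda>x::'a. x - s) \<in> borel_measurable borel" by measurable
  from measurable_sets[OF this assms] show ?thesis unfolding eq .
qed

lemma stat_facts:
  assumes "stationary_random_measure M \<theta> \<Psi>"
  shows "prob_space M" "\<theta> s \<in> M \<rightarrow>\<^sub>M M"
    "\<And>\<omega>. \<omega> \<in> space M \<Longrightarrow> sets (\<Psi> \<omega>) = sets borel"
    "\<And>B. B \<in> sets borel \<Longrightarrow> (\<lambda>\<omega>. emeasure (\<Psi> \<omega>) B) \<in> borel_measurable M"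
    "distr M M (\<theta> s) = M"
    "\<And>\<omega> B. \<omega> \<in> space M \<Longrightarrow> B \<in> sets borel \<Longrightarrow>
       emeasure (\<Psi> (\<theta> s \<omega>)) B = emeasure (\<Psi> \<omega>) ((\<lambda>x. x + s) ` B)"
proof -
  note A = assms[unfolded stationary_random_measure_def measurable_flow_def random_measure_def
      locally_finite_borel_def]
  show "prob_space M" using A by blast
  have j: "(\<lambda>(s, \<omega>). \<theta> s \<omega>) \<in> borel \<Otimes>\<^sub>M M \<rightarrow>\<^sub>M M" using A by blast
  have "(\<lambda>\<omega>. (\<lambda>(s, \<omega>). \<theta> s \<omega>) (Pair s \<omega>)) \<in> M \<rightarrow>\<^sub>M M"
    by (rule measurable_compose[OF measurable_Pair1' j]) simp
  thus "\<theta> s \<in> M \<rightarrow>\<^sub>M M" by simp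
  show "\<And>\<omega>. \<omega> \<in> space M \<Longrightarrow> sets (\<Psi> \<omega>) = sets borel" using A by blast
  show "\<And>B. B \<in> sets borel \<Longrightarrow> (\<lambda>\<omega>. emeasure (\<Psi> \<omega>) B) \<in> borel_measurable M" using A by blast
  show "distr M M (\<theta> s) = M" using A by blast
  show "\<And>\<omega> B. \<omega> \<in> space M \<Longrightarrow> B \<in> sets borel \<Longrightarrow>
       emeasure (\<Psi> (\<theta> s \<omega>)) B = emeasure (\<Psi> \<omega>) ((\<lambda>x. x + s) ` B)" using A by blast
qed

lemma ae_le_same_distr:
  fixes X Y :: "'w \<Rightarrow> ennreal"
  assumes P: "prob_space M" and X: "X \<in> borel_measurable M" and Y: "Y \<in> borel_measurable M"
    and le: "\<And>\<omega>. \<omega> \<in> space M \<Longrightarrow> Y \<omega> \<le> X \<omega>"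
    and d: "distr M borel Y = distr M borel X"
  shows "AE \<omega> in M. X \<omega> \<le> Y \<omega>"
proof -
  interpret prob_space M by (rule P)
  have key: "AE \<omega> in M. ennreal (real_of_rat r) < X \<omega> \<longrightarrow> ennreal (real_of_rat r) < Y \<omega>" for r
  proof -
    let ?q = "ennreal (real_of_rat r)"
    define SX where "SX = {\<omega>\<in>space M. ?q < X \<omega>}"
    define SY where "SY = {\<omega>\<in>space M. ?q < Y \<omega>}"
    have SXm: "SX \<in> sets M" unfolding SX_def using X by measurable
    have SYm: "SY \<in> sets M" unfolding SY_def using Y by measurable
    have "emeasure (distr M borel Y) {?q<..} = emeasure M (Y -` {?q<..} \<inter> space M)"
      by (rule emeasure_distr[OF Y]) simp
    also have "Y -` {?q<..} \<inter> space M = SY" unfolding SY_def by auto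
    finally have eY: "emeasure (distr M borel Y) {?q<..} = emeasure M SY" .
    have "emeasure (distr M borel X) {?q<..} = emeasure M (X -` {?q<..} \<inter> space M)"
      by (rule emeasure_distr[OF X]) simp
    also have "X -` {?q<..} \<inter> space M = SX" unfolding SX_def by auto
    finally have eX: "emeasure (distr M borel X) {?q<..} = emeasure M SX" .
    have eq: "emeasure M SY = emeasure M SX" using eX eY d by simp
    have sub: "SY \<subseteq> SX" unfolding SX_def SY_def using le by (auto intro: less_le_trans)
    have "emeasure M (SX - SY) = emeasure M SX - emeasure M SY"
      by (rule emeasure_Diff[OF _ SXm SYm sub]) simp
    hence "emeasure M (SX - SY) = 0" using eq by simp
    hence "SX - SY \<in> null_sets M" using SXm SYm by auto
    thus ?thesis by (rule AE_I') (auto simp: SX_def SY_def)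
  qed
  hence "AE \<omega> in M. \<forall>r. ennreal (real_of_rat r) < X \<omega> \<longrightarrow> ennreal (real_of_rat r) < Y \<omega>"
    by (simp add: AE_all_countable)
  thus ?thesis
  proof (rule AE_mp, intro AE_I2 impI)
    fix \<omega> assume h: "\<forall>r. ennreal (real_of_rat r) < X \<omega> \<longrightarrow> ennreal (real_of_rat r) < Y \<omega>"
    show "X \<omega> \<le> Y \<omega>"
    proof (rule ccontr)
      assume "\<not> X \<omega> \<le> Y \<omega>"
      hence "Y \<omega> < X \<omega>" by simp
      then obtain r :: rat where "Y \<omega> < ennreal (real_of_rat r)" "ennreal (real_of_rat r) < X \<omega>"
        using ennreal_rat_dense by blast
      with h show False by auto
    qed
  qed
qed

lemma translate_translate:
  fixes C :: "'a::ab_group_add set"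
  shows "(\<lambda>x. x + a) ` ((\<lambda>x. x + b) ` C) = (\<lambda>x. x + (a + b)) ` C"
  by (auto simp: image_image add.assoc add.commute)

lemma lemmaC:
  fixes \<Psi> :: "'w \<Rightarrow> 'a::euclidean_space measure"
  assumes st: "stationary_random_measure M \<theta> \<Psi>"
    and nz: "AE \<omega> in M. emeasure (\<Psi> \<omega>) UNIV \<noteq> 0"
    and Cb: "C \<in> sets borel"
    and sh: "(\<lambda>x. x + v) ` C \<subseteq> C"
    and it: "(\<Inter>n. (\<lambda>x. x + real n *\<^sub>R v) ` C) = {}"
    and un: "(\<Union>n. (\<lambda>x. x + (- real n) *\<^sub>R v) ` C) = UNIV"
  shows "AE \<omega> in M. emeasure (\<Psi> \<omega>) C = \<infinity>"
proof -
  note F = stat_facts[OF st]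
  interpret prob_space M by (rule F(1))
  define A where "A n = (\<lambda>x. x + real n *\<^sub>R v) ` C" for n
  define X where "X n \<omega> = emeasure (\<Psi> \<omega>) (A n)" for n \<omega>
  have Ab: "A n \<in> sets borel" for n unfolding A_def by (rule translate_borel[OF Cb])
  have Xm: "X n \<in> borel_measurable M" for n unfolding X_def by (rule F(4)[OF Ab])
  have Adec: "A (Suc n) \<subseteq> A n" for n
  proof
    fix y assume "y \<in> A (Suc n)"
    hence "y - real (Suc n) *\<^sub>R v \<in> C" by (simp add: A_def mem_translate)
    hence "(y - real (Suc n) *\<^sub>R v) + v \<in> C" using sh by blast
    moreover have "(y - real (Suc n) *\<^sub>R v) + v = y - real n *\<^sub>R v" by (simp add: algebra_simps)
    ultimately have "y - real n *\<^sub>R v \<in> C" by metis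
    thus "y \<in> A n" by (simp add: A_def mem_translate)
  qed
  have A0: "A 0 = C" by (simp add: A_def)
  have Xflow: "X n \<omega> = X 0 (\<theta> (real n *\<^sub>R v) \<omega>)" if "\<omega> \<in> space M" for n \<omega>
    unfolding X_def A0 using F(6)[OF that Cb] by (simp add: A_def)
  have dX: "distr M borel (X n) = distr M borel (X 0)" for n
  proof -
    have "distr M borel (X n) = distr M borel (\<lambda>\<omega>. X 0 (\<theta> (real n *\<^sub>R v) \<omega>))"
      by (rule distr_cong) (auto simp: Xflow)
    also have "\<dots> = distr (distr M M (\<theta> (real n *\<^sub>R v))) borel (X 0)"
      by (rule distr_distr[symmetric, OF Xm F(2), unfolded comp_def])
    also have "\<dots> = distr M borel (X 0)" by (simp add: F(5))
    finally show ?thesis .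
  qed
  have "AE \<omega> in M. X n \<omega> \<le> X (Suc n) \<omega>" for n
  proof (rule ae_le_same_distr[OF F(1) Xm Xm])
    fix \<omega> assume "\<omega> \<in> space M"
    thus "X (Suc n) \<omega> \<le> X n \<omega>" unfolding X_def using Adec F(3) Ab
      by (intro emeasure_mono) auto
  next
    show "distr M borel (X (Suc n)) = distr M borel (X n)" using dX[of "Suc n"] dX[of n] by simp
  qed
  hence ae1: "AE \<omega> in M. \<forall>n. X n \<omega> \<le> X (Suc n) \<omega>" by (simp add: AE_all_countable)
  have fin0: "AE \<omega> in M. X 0 \<omega> < \<infinity> \<longrightarrow> X 0 \<omega> = 0"
    using ae1 AE_space
  proof (eventually_elim)
    case (elim \<omega>)
    have sets\<omega>: "sets (\<Psi> \<omega>) = sets borel" using F(3) elim(2) by blast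
    have le: "X (Suc n) \<omega> \<le> X n \<omega>" for n unfolding X_def using Adec sets\<omega> Ab
      by (intro emeasure_mono) auto
    have const: "X n \<omega> = X 0 \<omega>" for n
    proof (induction n)
      case (Suc n) thus ?case using le[of n] elim(1) by (metis order_antisym)
    qed simp
    show ?case
    proof
      assume fin: "X 0 \<omega> < \<infinity>"
      have "(INF n. emeasure (\<Psi> \<omega>) (A n)) = emeasure (\<Psi> \<omega>) (\<Inter>n. A n)"
      proof (rule INF_emeasure_decseq)
        show "range A \<subseteq> sets (\<Psi> \<omega>)" using sets\<omega> Ab by auto
        show "decseq A" using Adec by (rule decseq_SucI)
        show "emeasure (\<Psi> \<omega>) (A n) \<noteq> \<infinity>" for n using const[of n] fin by (simp add: X_def)
      qed
      moreover have "(\<Inter>n. A n) = {}" using it by (simp add: A_def)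
      moreover have "(INF n. emeasure (\<Psi> \<omega>) (A n)) = X 0 \<omega>"
      proof -
        have "(\<lambda>n. emeasure (\<Psi> \<omega>) (A n)) = (\<lambda>n::nat. X 0 \<omega>)"
        proof (rule ext)
          fix n show "emeasure (\<Psi> \<omega>) (A n) = X 0 \<omega>" using const[of n] unfolding X_def .
        qed
        hence "(INF n. emeasure (\<Psi> \<omega>) (A n)) = (INF n::nat. X 0 \<omega>)" by (rule arg_cong)
        thus ?thesis by (metis INF_const UNIV_not_empty)
      qed
      ultimately show "X 0 \<omega> = 0" by simp
    qed
  qed
  define B where "B n = (\<lambda>x. x + (- real n) *\<^sub>R v) ` C" for n
  have Bb: "B n \<in> sets borel" for n unfolding B_def by (rule translate_borel[OF Cb])
  have Binc: "B n \<subseteq> B (Suc n)" for n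
  proof
    fix y assume "y \<in> B n"
    hence "y - (- real n) *\<^sub>R v \<in> C" unfolding B_def mem_translate .
    hence "y + real n *\<^sub>R v \<in> C" by simp
    hence "(y + real n *\<^sub>R v) + v \<in> C" using sh by blast
    moreover have "(y + real n *\<^sub>R v) + v = y - (- real (Suc n)) *\<^sub>R v" by (simp add: algebra_simps)
    ultimately have "y - (- real (Suc n)) *\<^sub>R v \<in> C" by metis
    thus "y \<in> B (Suc n)" unfolding B_def mem_translate .
  qed
  define E where "E n = {\<omega>\<in>space M. emeasure (\<Psi> \<omega>) (B n) = 0}" for n
  have Em: "E n \<in> sets M" for n unfolding E_def using F(4)[OF Bb] by measurable
  have B0: "B 0 = C" by (simp add: B_def)
  have Eflow: "E n = \<theta> ((- real n) *\<^sub>R v) -` E 0 \<inter> space M" for n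
  proof -
    have "\<theta> ((- real n) *\<^sub>R v) \<omega> \<in> space M" if "\<omega> \<in> space M" for \<omega>
      using measurable_space[OF F(2) that] .
    thus ?thesis unfolding E_def B0 using F(6)[OF _ Cb, of _ "(- real n) *\<^sub>R v"]
      by (auto simp: B_def)
  qed
  have Emeas: "emeasure M (E n) = emeasure M (E 0)" for n
  proof -
    have "emeasure M (E n) = emeasure (distr M M (\<theta> ((- real n) *\<^sub>R v))) (E 0)"
      unfolding Eflow[of n] by (rule emeasure_distr[symmetric, OF F(2) Em])
    thus ?thesis by (simp add: F(5))
  qed
  have Edec: "decseq E"
  proof (rule decseq_SucI)
    fix n show "E (Suc n) \<subseteq> E n"
    proof
      fix \<omega> assume "\<omega> \<in> E (Suc n)"
      hence \<omega>: "\<omega> \<in> space M" "emeasure (\<Psi> \<omega>) (B (Suc n)) = 0" by (auto simp: E_def)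
      have "emeasure (\<Psi> \<omega>) (B n) \<le> emeasure (\<Psi> \<omega>) (B (Suc n))"
        using Binc F(3)[OF \<omega>(1)] Bb by (intro emeasure_mono) auto
      thus "\<omega> \<in> E n" using \<omega> by (simp add: E_def)
    qed
  qed
  have "(INF n. emeasure M (E n)) = emeasure M (\<Inter>n. E n)"
    by (rule INF_emeasure_decseq[OF _ Edec]) (use Em in auto)
  moreover have "(\<lambda>n. emeasure M (E n)) = (\<lambda>n::nat. emeasure M (E 0))"
    by (rule ext) (rule Emeas)
  ultimately have "emeasure M (E 0) = emeasure M (\<Inter>n. E n)"
    by (metis INF_const UNIV_not_empty)
  moreover have "(\<Inter>n. E n) \<subseteq> {\<omega>\<in>space M. emeasure (\<Psi> \<omega>) UNIV = 0}"
  proof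
    fix \<omega> assume "\<omega> \<in> (\<Inter>n. E n)"
    hence \<omega>: "\<omega> \<in> space M" "\<And>n. emeasure (\<Psi> \<omega>) (B n) = 0" by (auto simp: E_def)
    have "(SUP n. emeasure (\<Psi> \<omega>) (B n)) = emeasure (\<Psi> \<omega>) (\<Union>n. B n)"
      by (rule SUP_emeasure_incseq) (use F(3)[OF \<omega>(1)] Bb Binc incseq_SucI[of B] in auto)
    moreover have "(\<Union>n. B n) = UNIV" using un by (simp add: B_def)
    ultimately show "\<omega> \<in> {\<omega>\<in>space M. emeasure (\<Psi> \<omega>) UNIV = 0}" using \<omega> by simp
  qed
  moreover have "{\<omega>\<in>space M. emeasure (\<Psi> \<omega>) UNIV = 0} \<in> null_sets M"
  proof -
    have "{\<omega>\<in>space M. emeasure (\<Psi> \<omega>) UNIV = 0} \<in> sets M" using F(4)[of UNIV] by measurable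
    thus ?thesis using nz by (simp add: AE_iff_measurable[OF _ refl] null_sets_def)
  qed
  ultimately have "emeasure M (E 0) = 0"
    by (metis (no_types, lifting) emeasure_mono null_setsD1 null_setsD2 le_zero_eq)
  hence "E 0 \<in> null_sets M" using Em by auto
  hence ae2: "AE \<omega> in M. X 0 \<omega> \<noteq> 0"
    by (rule AE_I') (auto simp: E_def X_def A0 B0)
  from fin0 ae2 show ?thesis
    by eventually_elim (auto simp: X_def A0 top.not_eq_extremum[symmetric])
qed

theorem mainTheorem16:
  shows "(\<forall>\<psi> :: 'a::euclidean_space measure.
            locally_finite_borel \<psi>
            \<and> (\<forall>a b. a \<noteq> 0 \<longrightarrow> emeasure \<psi> {x. a \<bullet> x > b} = \<infinity>)
            \<longrightarrow> (\<forall>\<xi>. bounded (voronoi_territory \<psi> \<xi>)))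
       \<and> (\<forall>(M :: 'w measure) (\<theta> :: 'a \<Rightarrow> 'w \<Rightarrow> 'w) (\<Psi> :: 'w \<Rightarrow> 'a measure).
            stationary_random_measure M \<theta> \<Psi>
            \<and> (AE \<omega> in M. emeasure (\<Psi> \<omega>) UNIV \<noteq> 0)
            \<longrightarrow> (AE \<omega> in M. \<forall>\<xi>. bounded (voronoi_territory (\<Psi> \<omega>) \<xi>)))"
proof (intro conjI allI impI)
  fix \<psi> :: "'a measure" and \<xi> :: 'a
  assume h: "locally_finite_borel \<psi> \<and> (\<forall>a b. a \<noteq> 0 \<longrightarrow> emeasure \<psi> {x. a \<bullet> x > b} = \<infinity>)"
  show "bounded (voronoi_territory \<psi> \<xi>)"
    using h by (intro lemmaA) (auto simp: locally_finite_borel_def)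
next
  fix M :: "'w measure" and \<theta> :: "'a \<Rightarrow> 'w \<Rightarrow> 'w" and \<Psi> :: "'w \<Rightarrow> 'a measure"
  assume h: "stationary_random_measure M \<theta> \<Psi> \<and> (AE \<omega> in M. emeasure (\<Psi> \<omega>) UNIV \<noteq> 0)"
  hence st: "stationary_random_measure M \<theta> \<Psi>" and nz: "AE \<omega> in M. emeasure (\<Psi> \<omega>) UNIV \<noteq> 0"
    by auto
  note F = stat_facts[OF st]
  obtain D :: "'a set" where D: "countable D" "\<forall>X. open X \<longrightarrow> X \<noteq> {} \<longrightarrow> (\<exists>d\<in>D. d \<in> X)"
    using countable_dense_exists by blast
  have "\<forall>pv\<in>D \<times> D. AE \<omega> in M. snd pv \<noteq> 0 \<longrightarrow> emeasure (\<Psi> \<omega>) (vcone (fst pv) (snd pv)) = \<infinity>"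
  proof
    fix pv assume "pv \<in> D \<times> D"
    obtain p v where pv: "pv = (p, v)" by fastforce
    show "AE \<omega> in M. snd pv \<noteq> 0 \<longrightarrow> emeasure (\<Psi> \<omega>) (vcone (fst pv) (snd pv)) = \<infinity>"
    proof (cases "v = 0")
      case True thus ?thesis by (simp add: pv)
    next
      case False
      have "AE \<omega> in M. emeasure (\<Psi> \<omega>) (vcone p v) = \<infinity>"
        by (rule lemmaC[OF st nz borel_open[OF vcone_open] vcone_shift[OF False]
              vcone_inter[OF False] vcone_union[OF False]])
      thus ?thesis by (simp add: pv)
    qed
  qed
  hence "AE \<omega> in M. \<forall>pv\<in>D \<times> D. snd pv \<noteq> 0 \<longrightarrow> emeasure (\<Psi> \<omega>) (vcone (fst pv) (snd pv)) = \<infinity>"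
    using D(1) by (subst AE_ball_countable) auto
  thus "AE \<omega> in M. \<forall>\<xi>. bounded (voronoi_territory (\<Psi> \<omega>) \<xi>)"
    using AE_space
  proof eventually_elim
    case (elim \<omega>)
    have sets: "sets (\<Psi> \<omega>) = sets borel" using F(3) elim(2) by blast
    have "\<forall>p\<in>D. \<forall>v\<in>D. v \<noteq> 0 \<longrightarrow> emeasure (\<Psi> \<omega>) (vcone p v) = \<infinity>"
      using elim(1) by auto
    from lemmaB[OF sets D(2) this] show ?case using lemmaA[OF sets] by blast
  qed
qed

end
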